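(* Assume the standing setting below. For every $\beta>0$ and $R>0$, $$\limsup_{N\to\infty}A^{sf}_N(\beta,R)\le\limsup_{N\to\infty}\frac1N\log\mathbb{E}\,Z^{sf}_N(\beta,R)\le\max\Big(\beta\bar\lambda R^2,\ \frac{\beta^2R^4}{4\theta}\Big),$$ where $\bar\lambda$ and $\theta$ are the constants in condition (1) of Hypothesis H.
   Context: Standing setting (Hypothesis H). For each $N\ge1$, $J=J^{(N)}=(J_{ij})_{i,j=1}^N$ is a random real symmetric matrix from the symmetric Wigner ensemble (entries $J_{ij}$, $i\le j$, independent, $J_{ji}=J_{ij}$) with $\mathbb{E}J_{ij}=0$, $\mathbb{E}J_{ij}^2=J^2>0$, and there is $\theta_0>0$ with $\sup_{N,i,j}\mathbb{E}\,e^{\theta_0 J_{ij}^2/N}<\infty$; all matrices are defined on a common probability space. Let $\lambda_1,\dots,\lambda_N$ denote the eigenvalues of $J/\sqrt N$. Hypothesis H further requires: (1) there are constants $\bar\lambda>0$, $C_1>0$, $\theta>0$ such that for every $a>\bar\lambda$ and every eigenvalue $\lambda$ of $J/\sqrt N$, $P(|\lambda|\ge a)\le C_1e^{-\theta a^2N}$; (2) the empirical spectral distribution $\frac1N\sum_i\delta_{\lambda_i}$ converges as $N\to\infty$ to the semicircle law with density $\rho(\mu)=\frac{2\sqrt{\bar\lambda^2-\mu^2}}{\pi\bar\lambda^2}$ on $[-\bar\lambda,\bar\lambda]$. For $z\in\mathbb{R}^N$ the Hamiltonian is $H_N(z,J)=-\frac1{\sqrt N}\sum_{i,j=1}^N J_{ij}z_iz_j=-\langle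 z,(J/\sqrt N)z\rangle$, which in an orthonormal eigenbasis of $J/\sqrt N$ reads $-\sum_i\lambda_iz_i^2$. $\beta>0$ is the inverse temperature. Spherical model: for $R>0$, $\sigma_{R,N}$ is the uniform probability measure on the sphere $\{z\in\mathbb{R}^N:\|z\|=R\sqrt N\}$; $Z^{sf}_N(\beta,R)=\int e^{-\beta H_N(z,J)}\,d\sigma_{R,N}(z)$ and $A^{sf}_N(\beta,R)=\frac1N\mathbb{E}\log Z^{sf}_N(\beta,R)$. *)

theory Defs
  imports "HOL-Probability.Probability" "Jordan_Normal_Form.Char_Poly"
begin

text \<open>Vectors in R^N are represented as functions nat => real, only the
coordinates 0..N-1 being relevant; Lebesgue measure on R^N is the product
measure PiM {..<N} (%_. lborel).\<close>

definition eucl_norm :: "nat \<Rightarrow> (nat \<Rightarrow> real) \<Rightarrow> real" where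
  "eucl_norm N z = sqrt (\<Sum>i<N. (z i)\<^sup>2)"

text \<open>Uniform probability measure on the sphere of radius r in R^N, as the
normalized cone measure: the image of the uniform distribution on the unit
ball under the radial projection x |-> r x / |x|.  (For the Euclidean sphere
the cone measure coincides with normalized surface measure.)\<close>

definition unif_sphere :: "nat \<Rightarrow> real \<Rightarrow> (nat \<Rightarrow> real) measure" where
  "unif_sphere N r =
     distr (uniform_measure (PiM {..<N} (\<lambda>_. lborel))
              {z \<in> space (PiM {..<N} (\<lambda>_. lborel)). eucl_norm N z \<le> 1})
           (PiM {..<N} (\<lambda>_. borel))
           (\<lambda>z. restrict (\<lambda>i. r * z i / eucl_norm N z) {..<N})"

definition sigma_RN :: "real \<Rightarrow> nat \<Rightarrow> (nat \<Rightarrow> real) measure" where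
  "sigma_RN R N = unif_sphere N (R * sqrt (real N))"

definition scaled_mat :: "nat \<Rightarrow> (nat \<Rightarrow> nat \<Rightarrow> real) \<Rightarrow> real mat" where
  "scaled_mat N J = mat N N (\<lambda>(i,j). J i j / sqrt (real N))"

definition hamiltonian :: "nat \<Rightarrow> (nat \<Rightarrow> nat \<Rightarrow> real) \<Rightarrow> (nat \<Rightarrow> real) \<Rightarrow> real" where
  "hamiltonian N J z = - (1 / sqrt (real N)) * (\<Sum>i<N. \<Sum>j<N. J i j * z i * z j)"

definition Z_sf :: "nat \<Rightarrow> real \<Rightarrow> real \<Rightarrow> (nat \<Rightarrow> nat \<Rightarrow> real) \<Rightarrow> real" where
  "Z_sf N \<beta> R J = (\<integral>z. exp (- \<beta> * hamiltonian N J z) \<partial>sigma_RN R N)"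

definition esd_avg :: "nat \<Rightarrow> real mat \<Rightarrow> (real \<Rightarrow> real) \<Rightarrow> real" where
  "esd_avg N A f = (1 / real N) *
     (\<Sum>x\<in>{x. poly (char_poly A) x = 0}. real (order x (char_poly A)) * f x)"

definition semicircle_density :: "real \<Rightarrow> real \<Rightarrow> real" where
  "semicircle_density lb \<mu> =
     (if \<bar>\<mu>\<bar> \<le> lb then 2 * sqrt (lb\<^sup>2 - \<mu>\<^sup>2) / (pi * lb\<^sup>2) else 0)"

end

theory Submission
  imports Defs
begin


definition qf :: "nat \<Rightarrow> (nat \<Rightarrow> nat \<Rightarrow> real) \<Rightarrow> (nat \<Rightarrow> real) \<Rightarrow> real" where
  "qf N A z = (\<Sum>i<N. \<Sum>j<N. A i j * z i * z j)"
definition nsq :: "nat \<Rightarrow> (nat \<Rightarrow> real) \<Rightarrow> real" where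
  "nsq N z = (\<Sum>i<N. (z i)\<^sup>2)"

lemma qf_add:
  assumes sym: "\<And>i j. i < N \<Longrightarrow> j < N \<Longrightarrow> A i j = A j i"
  shows "qf N A (\<lambda>i. x i + t * u i) = qf N A x + 2*t*(\<Sum>i<N. u i * (\<Sum>j<N. A i j * x j)) + t^2 * qf N A u"
proof -
  have e: "A i j * (x i + t * u i) * (x j + t * u j) =
     A i j * x i * x j + t * (A i j * u i * x j) + t * (A i j * x i * u j) + t^2 * (A i j * u i * u j)" for i j
    by (simp add: algebra_simps power2_eq_square)
  have s1: "(\<Sum>i<N. \<Sum>j<N. A i j * x i * u j) = (\<Sum>i<N. \<Sum>j<N. A i j * u i * x j)"
  proof -
    have "(\<Sum>i<N. \<Sum>j<N. A i j * x i * u j) = (\<Sum>j<N. \<Sum>i<N. A i j * x i * u j)"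
      by (rule sum.swap)
    also have "\<dots> = (\<Sum>j<N. \<Sum>i<N. A j i * u j * x i)"
      by (intro sum.cong refl) (simp add: sym mult.commute mult.left_commute)
    finally show ?thesis .
  qed
  have s2: "(\<Sum>i<N. u i * (\<Sum>j<N. A i j * x j)) = (\<Sum>i<N. \<Sum>j<N. A i j * u i * x j)"
    by (simp add: sum_distrib_left algebra_simps)
  have "qf N A (\<lambda>i. x i + t * u i) = (\<Sum>i<N. \<Sum>j<N. A i j * x i * x j) + t * (\<Sum>i<N. \<Sum>j<N. A i j * u i * x j)
      + t * (\<Sum>i<N. \<Sum>j<N. A i j * x i * u j) + t^2 * (\<Sum>i<N. \<Sum>j<N. A i j * u i * u j)"
    unfolding qf_def e sum.distrib sum_distrib_left ..
  then show ?thesis unfolding s1 s2 qf_def by simp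
qed

lemma nsq_add: "nsq N (\<lambda>i. x i + t * u i) = nsq N x + 2*t*(\<Sum>i<N. x i * u i) + t^2 * nsq N u"
  unfolding nsq_def by (simp add: power2_eq_square algebra_simps sum.distrib sum_distrib_left)

lemma quad_nonneg_zero:
  fixes b g :: real
  assumes "\<And>t. 0 \<le> 2*t*b + t^2*g"
  shows "b = 0"
proof (rule ccontr)
  assume b: "b \<noteq> 0"
  define G where "G = \<bar>g\<bar> + 1"
  have G: "G > 0" "g < G" "g \<le> G" unfolding G_def by auto
  have "0 \<le> 2*(-b/G)*b + (-b/G)^2*g" by (rule assms)
  also have "\<dots> = b^2/G * (g/G - 2)" using G by (simp add: field_simps power2_eq_square)
  also have "\<dots> < 0"
  proof (rule mult_pos_neg)
    show "0 < b^2/G" using b G by simp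
    show "g/G - 2 < 0" using G by (simp add: field_simps)
  qed
  finally show False by simp
qed

lemma qf_cong: "(\<And>i. i < N \<Longrightarrow> x i = y i) \<Longrightarrow> qf N A x = qf N A y"
  unfolding qf_def by (intro sum.cong refl) simp
lemma nsq_cong: "(\<And>i. i < N \<Longrightarrow> x i = y i) \<Longrightarrow> nsq N x = nsq N y"
  unfolding nsq_def by (intro sum.cong refl) simp
lemma qf_scale: "qf N A (\<lambda>i. c * x i) = c^2 * qf N A x"
  unfolding qf_def by (simp add: sum_distrib_left power2_eq_square algebra_simps)
lemma nsq_scale: "nsq N (\<lambda>i. c * x i) = c^2 * nsq N x"
  unfolding nsq_def by (simp add: sum_distrib_left power2_eq_square algebra_simps)
lemma nsq_nonneg: "nsq N x \<ge> 0" unfolding nsq_def by (simp add: sum_nonneg)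
lemma nsq_comp_le: "i < N \<Longrightarrow> (x i)^2 \<le> nsq N x"
  unfolding nsq_def by (rule member_le_sum) auto
lemma nsq_zero: "nsq N x = 0 \<Longrightarrow> i < N \<Longrightarrow> x i = 0"
  using nsq_comp_le[of i N x] by simp
lemma qf_zero: "(\<And>i. i < N \<Longrightarrow> x i = 0) \<Longrightarrow> qf N A x = 0"
  unfolding qf_def by simp

lemma compact_box: "compact (PiE UNIV (\<lambda>i::nat. if i < N then {-1..1::real} else {0}))"
proof -
  have "compactin (product_topology (\<lambda>i. euclidean) UNIV) (PiE UNIV (\<lambda>i::nat. if i < N then {-1..1::real} else {0}))"
    by (subst compactin_PiE) auto
  then show ?thesis by (simp add: euclidean_product_topology)
qed

lemma cont_nsq: "continuous_on UNIV (nsq N)"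
  unfolding nsq_def
  by (intro continuous_intros continuous_on_product_then_coordinatewise continuous_on_id)
lemma cont_qf: "continuous_on UNIV (qf N A)"
  unfolding qf_def
  by (intro continuous_intros continuous_on_product_then_coordinatewise continuous_on_id)

lemma qf_le_max:
  assumes N: "N \<ge> 1"
  shows "\<exists>x. nsq N x = 1 \<and> (\<forall>z. qf N A z \<le> qf N A x * nsq N z)"
proof -
  define K where "K = PiE UNIV (\<lambda>i::nat. if i < N then {-1..1::real} else {0}) \<inter> {z. nsq N z = 1}"
  have "compact K" unfolding K_def
    by (intro compact_Int_closed compact_box closed_Collect_eq cont_nsq continuous_on_const)
  moreover have "(\<lambda>i. if i = 0 then 1 else 0) \<in> K"
  proof -
    have "(\<Sum>i<N. (if i = 0 then 1 else 0::real)^2) = (\<Sum>i<N. if i = 0 then 1 else 0)" by (rule sum.cong) auto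
    also have "\<dots> = 1" using N by simp
    finally have e: "(\<Sum>i<N. (if i = 0 then 1 else 0::real)^2) = 1" .
    show ?thesis using e N unfolding K_def nsq_def by (auto simp: PiE_iff)
  qed
  ultimately obtain x where x: "x \<in> K" "\<And>y. y \<in> K \<Longrightarrow> qf N A y \<le> qf N A x"
    using continuous_attains_sup[of K "qf N A"] cont_qf continuous_on_subset by blast
  have "qf N A z \<le> qf N A x * nsq N z" for z
  proof (cases "nsq N z = 0")
    case True then show ?thesis using qf_zero[of N z A] nsq_zero by auto
  next
    case False
    define s where "s = sqrt (nsq N z)"
    have s: "s > 0" "s^2 = nsq N z" using False nsq_nonneg[of N z] by (auto simp: s_def)
    define y where "y = (\<lambda>i. if i < N then z i / s else 0)"
    have ny: "nsq N y = (1/s)^2 * nsq N z"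
      by (subst nsq_scale[symmetric], rule nsq_cong) (simp add: y_def)
    have qy: "qf N A y = (1/s)^2 * qf N A z"
      by (subst qf_scale[symmetric], rule qf_cong) (simp add: y_def)
    have "\<bar>z i\<bar> \<le> s" if "i < N" for i
      using nsq_comp_le[OF that, of z] s by (metis abs_le_square_iff abs_of_pos)
    then have "\<bar>y i\<bar> \<le> 1" if "i < N" for i using that s by (simp add: y_def abs_div)
    moreover have "nsq N y = 1" using ny s False by (simp add: field_simps)
    ultimately have "y \<in> K" unfolding K_def PiE_iff
      by (auto simp: abs_le_iff) (auto simp: y_def)
    then have "(1/s)^2 * qf N A z \<le> qf N A x" using x(2)[of y] qy by simp
    then have "qf N A z / nsq N z \<le> qf N A x" using s by (simp add: power_divide)
    moreover have "nsq N z > 0" using s by (metis zero_less_power)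
    ultimately show ?thesis by (simp add: divide_le_eq mult.commute)
  qed
  moreover have "nsq N x = 1" using x unfolding K_def by auto
  ultimately show ?thesis by blast
qed

lemma qf_max_eigen:
  assumes N: "N \<ge> 1" and sym: "\<And>i j. i < N \<Longrightarrow> j < N \<Longrightarrow> A i j = A j i"
  shows "\<exists>x. nsq N x = 1 \<and> (\<forall>z. qf N A z \<le> qf N A x * nsq N z)
          \<and> (\<forall>i<N. (\<Sum>j<N. A i j * x j) = qf N A x * x i)"
proof -
  obtain x where x1: "nsq N x = 1" and xm: "\<And>z. qf N A z \<le> qf N A x * nsq N z"
    using qf_le_max[OF N] by blast
  define \<mu> where "\<mu> = qf N A x"
  define u where "u = (\<lambda>i. \<mu> * x i - (\<Sum>j<N. A i j * x j))"
  have "0 \<le> 2*t*(\<Sum>i<N. (u i)^2) + t^2*(\<mu> * nsq N u - qf N A u)" for t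
  proof -
    have "qf N A (\<lambda>i. x i + t * u i) \<le> \<mu> * nsq N (\<lambda>i. x i + t * u i)"
      using xm[of "\<lambda>i. x i + t * u i"] by (simp add: \<mu>_def mult.commute)
    then have "0 \<le> \<mu> * (1 + 2*t*(\<Sum>i<N. x i * u i) + t^2 * nsq N u) -
        (\<mu> + 2*t*(\<Sum>i<N. u i * (\<Sum>j<N. A i j * x j)) + t^2 * qf N A u)"
      using qf_add[OF sym, where x=x and t=t and u=u] nsq_add[where x=x and t=t and u=u] x1 unfolding \<mu>_def by simp
    also have "\<dots> = 2*t*(\<Sum>i<N. u i * (\<mu> * x i - (\<Sum>j<N. A i j * x j))) + t^2*(\<mu> * nsq N u - qf N A u)"
      by (simp add: algebra_simps sum_subtractf sum_distrib_left)
    also have "(\<Sum>i<N. u i * (\<mu> * x i - (\<Sum>j<N. A i j * x j))) = (\<Sum>i<N. (u i)^2)"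
      by (simp add: u_def power2_eq_square)
    finally show ?thesis .
  qed
  then have "(\<Sum>i<N. (u i)^2) = 0" by (rule quad_nonneg_zero)
  then have "u i = 0" if "i < N" for i using nsq_zero[of N u i] that by (simp add: nsq_def)
  then have "\<forall>i<N. (\<Sum>j<N. A i j * x j) = qf N A x * x i" by (simp add: u_def \<mu>_def)
  then show ?thesis using x1 xm by blast
qed

definition Mt :: "nat \<Rightarrow> (nat \<Rightarrow> nat \<Rightarrow> real) \<Rightarrow> real mat" where
  "Mt N A = mat N N (\<lambda>(i,j). A i j)"

lemma Mt_mult: "i < N \<Longrightarrow> v \<in> carrier_vec N \<Longrightarrow> (Mt N A *\<^sub>v v) $ i = (\<Sum>j<N. A i j * v $ j)"
  unfolding Mt_def by (simp add: scalar_prod_def atLeast0LessThan)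

lemma eigen_of_max:
  assumes x1: "nsq N x = 1" and eq: "\<forall>i<N. (\<Sum>j<N. A i j * x j) = qf N A x * x i"
  shows "eigenvalue (Mt N A) (qf N A x)"
proof -
  have c: "vec N x \<in> carrier_vec N" by simp
  have "vec N x \<noteq> 0\<^sub>v N"
  proof
    assume "vec N x = 0\<^sub>v N"
    then have "x i = 0" if "i < N" for i using that by (metis index_vec index_zero_vec(1))
    then have "nsq N x = 0" by (simp add: nsq_def)
    then show False using x1 by simp
  qed
  moreover have "Mt N A *\<^sub>v vec N x = qf N A x \<cdot>\<^sub>v vec N x"
    by (rule eq_vecI) (auto simp: Mt_mult eq, simp add: Mt_def)
  moreover have "dim_row (Mt N A) = N" by (simp add: Mt_def)
  ultimately show ?thesis unfolding eigenvalue_def eigenvector_def using c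
    by metis
qed

lemma eigen_vec:
  assumes "eigenvalue (Mt N A) lam"
  shows "\<exists>v. nsq N v = 1 \<and> qf N A v = lam"
proof -
  obtain w where w: "w \<in> carrier_vec N" "w \<noteq> 0\<^sub>v N" "Mt N A *\<^sub>v w = lam \<cdot>\<^sub>v w"
    using assms unfolding eigenvalue_def eigenvector_def by (auto simp: Mt_def)
  define y where "y = (\<lambda>i. w $ i)"
  have eq: "(\<Sum>j<N. A i j * y j) = lam * y i" if "i < N" for i
  proof -
    have "(Mt N A *\<^sub>v w) $ i = (lam \<cdot>\<^sub>v w) $ i" using w by simp
    then show ?thesis using that w(1) by (simp add: Mt_mult y_def)
  qed
  have qy: "qf N A y = lam * nsq N y"
  proof -
    have "qf N A y = (\<Sum>i<N. y i * (\<Sum>j<N. A i j * y j))"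
      unfolding qf_def by (simp add: sum_distrib_left algebra_simps)
    also have "\<dots> = (\<Sum>i<N. lam * (y i)^2)" by (intro sum.cong refl) (simp add: eq power2_eq_square)
    finally show ?thesis by (simp add: nsq_def sum_distrib_left)
  qed
  have "nsq N y \<noteq> 0"
  proof
    assume "nsq N y = 0"
    then have "w = 0\<^sub>v N" using w(1) nsq_zero[of N y] by (intro eq_vecI) (auto simp: y_def)
    then show False using w(2) by simp
  qed
  then have pos: "nsq N y > 0" using nsq_nonneg[of N y] by simp
  define s where "s = sqrt (nsq N y)"
  have s: "s > 0" "s^2 = nsq N y" using pos by (auto simp: s_def)
  define v where "v = (\<lambda>i. (1/s) * y i)"
  have "nsq N v = 1" using s pos unfolding v_def nsq_scale by (simp add: power_divide)
  moreover have "qf N A v = lam" using s qy pos unfolding v_def qf_scale by (simp add: power_divide)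
  ultimately show ?thesis by blast
qed

lemma qf_neg: "qf N (\<lambda>i j. - A i j) z = - qf N A z"
  unfolding qf_def by (simp add: sum_negf)

lemma spec:
  assumes N: "N \<ge> 1" and sym: "\<And>i j. i < N \<Longrightarrow> j < N \<Longrightarrow> A i j = A j i"
  shows "\<exists>m. m \<ge> 0 \<and> (\<forall>z. \<bar>qf N A z\<bar> \<le> m * nsq N z) \<and> (\<exists>lam. eigenvalue (Mt N A) lam \<and> \<bar>lam\<bar> = m)
     \<and> (\<forall>lam. eigenvalue (Mt N A) lam \<longrightarrow> \<bar>lam\<bar> \<le> m)"
proof -
  obtain x where x1: "nsq N x = 1" and xm: "\<forall>z. qf N A z \<le> qf N A x * nsq N z"
     and xe: "\<forall>i<N. (\<Sum>j<N. A i j * x j) = qf N A x * x i"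
    using qf_max_eigen[OF N, of A, OF sym] by blast
  have "\<exists>y. nsq N y = 1 \<and> (\<forall>z. qf N (\<lambda>i j. - A i j) z \<le> qf N (\<lambda>i j. - A i j) y * nsq N z)
          \<and> (\<forall>i<N. (\<Sum>j<N. - A i j * y j) = qf N (\<lambda>i j. - A i j) y * y i)"
    by (rule qf_max_eigen[OF N]) (simp add: sym)
  then obtain y where y1: "nsq N y = 1" and ym: "\<forall>z. qf N (\<lambda>i j. - A i j) z \<le> qf N (\<lambda>i j. - A i j) y * nsq N z"
     and ye: "\<forall>i<N. (\<Sum>j<N. - A i j * y j) = qf N (\<lambda>i j. - A i j) y * y i"
    by blast
  define \<mu> where "\<mu> = qf N A x"
  define \<nu> where "\<nu> = qf N A y"
  have up: "qf N A z \<le> \<mu> * nsq N z" for z using xm \<mu>_def by simp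
  have lo: "\<nu> * nsq N z \<le> qf N A z" for z using ym[rule_format, of z] by (simp add: qf_neg \<nu>_def)
  have evx: "eigenvalue (Mt N A) \<mu>" using eigen_of_max[OF x1 xe] \<mu>_def by simp
  have ye': "\<forall>i<N. (\<Sum>j<N. A i j * y j) = qf N A y * y i"
  proof (intro allI impI)
    fix i assume "i < N"
    then have "(\<Sum>j<N. - A i j * y j) = - qf N A y * y i" using ye by (simp add: qf_neg)
    then show "(\<Sum>j<N. A i j * y j) = qf N A y * y i" by (simp add: sum_negf)
  qed
  have evy: "eigenvalue (Mt N A) \<nu>" using eigen_of_max[OF y1 ye'] \<nu>_def by simp
  have nm: "\<nu> \<le> \<mu>" using up[of y] y1 \<nu>_def by simp
  define m where "m = max \<mu> (- \<nu>)"
  have m0: "m \<ge> 0" using nm unfolding m_def by linarith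
  have bd: "\<bar>qf N A z\<bar> \<le> m * nsq N z" for z
  proof -
    have "\<mu> * nsq N z \<le> m * nsq N z" "(- \<nu>) * nsq N z \<le> m * nsq N z"
      by (intro mult_right_mono nsq_nonneg, simp add: m_def)+
    then show ?thesis using up[of z] lo[of z] by (simp add: abs_le_iff)
  qed
  have ex: "\<exists>lam. eigenvalue (Mt N A) lam \<and> \<bar>lam\<bar> = m"
  proof (cases "\<mu> \<ge> - \<nu>")
    case True then show ?thesis using evx nm by (intro exI[of _ \<mu>]) (auto simp: m_def)
  next
    case False then show ?thesis using evy nm by (intro exI[of _ \<nu>]) (auto simp: m_def)
  qed
  have all: "\<bar>lam\<bar> \<le> m" if evl: "eigenvalue (Mt N A) lam" for lam
  proof -
    obtain v where "nsq N v = 1" "qf N A v = lam" using eigen_vec[OF evl] by blast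
    then show ?thesis using bd[of v] by simp
  qed
  show ?thesis using m0 bd ex all by blast
qed


definition Dset :: "nat \<Rightarrow> (nat \<Rightarrow> real) set" where
  "Dset N = {w. (\<forall>i. w i \<in> \<rat>) \<and> (\<forall>i\<ge>N. w i = 0) \<and> nsq N w \<le> 1}"

lemma countable_Dset: "countable (Dset N)"
proof -
  have "Dset N \<subseteq> (\<lambda>f i. if i < N then f i else 0) ` (PiE {..<N} (\<lambda>_. \<rat>))"
  proof
    fix w assume w: "w \<in> Dset N"
    have "w = (\<lambda>i. if i < N then restrict w {..<N} i else 0)"
      using w by (auto simp: Dset_def fun_eq_iff)
    moreover have "restrict w {..<N} \<in> PiE {..<N} (\<lambda>_. \<rat>)" using w by (auto simp: Dset_def)
    ultimately show "w \<in> (\<lambda>f i. if i < N then f i else 0) ` (PiE {..<N} (\<lambda>_. \<rat>))" by blast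
  qed
  moreover have "countable (PiE {..<N} (\<lambda>_. \<rat>::real set))"
    by (intro countable_PiE) (auto simp: countable_rat)
  then have "countable ((\<lambda>f i. if i < N then f i else 0) ` (PiE {..<N} (\<lambda>_. \<rat>::real set)))"
    by (rule countable_image)
  ultimately show ?thesis by (rule countable_subset)
qed

definition trunc :: "real \<Rightarrow> real \<Rightarrow> real" where
  "trunc K x = (if x \<ge> 0 then of_int \<lfloor>x*K\<rfloor> / K else of_int \<lceil>x*K\<rceil> / K)"

lemma trunc_props:
  assumes K: "K > 0"
  shows "\<bar>trunc K x\<bar> \<le> \<bar>x\<bar>" "\<bar>trunc K x - x\<bar> \<le> 1/K"
proof -
  have a: "of_int \<lfloor>x*K\<rfloor> \<le> x*K" "x*K < of_int \<lfloor>x*K\<rfloor> + 1" by linarith+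
  have b: "x*K \<le> of_int \<lceil>x*K\<rceil>" "of_int \<lceil>x*K\<rceil> < x*K + 1" by linarith+
  show "\<bar>trunc K x\<bar> \<le> \<bar>x\<bar>"
  proof (cases "x \<ge> 0")
    case True
    have "0 \<le> x*K" using True K by simp
    then have "0 \<le> (of_int \<lfloor>x*K\<rfloor>::real)" by simp
    then show ?thesis using True K a by (simp add: trunc_def divide_le_eq abs_of_nonneg)
  next
    case False
    have "x*K \<le> 0" using False K by (simp add: mult_nonpos_nonneg)
    then have "of_int \<lceil>x*K\<rceil> \<le> (0::real)" by simp
    have t: "trunc K x = of_int \<lceil>x*K\<rceil> / K" using False by (simp add: trunc_def)
    have "of_int \<lceil>x*K\<rceil> / K \<le> 0" using K \<open>of_int \<lceil>x*K\<rceil> \<le> (0::real)\<close> by (simp add: divide_nonpos_pos)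
    moreover have "x \<le> of_int \<lceil>x*K\<rceil> / K" using K b by (simp add: le_divide_eq)
    ultimately show ?thesis using False t by linarith
  qed
  show "\<bar>trunc K x - x\<bar> \<le> 1/K"
  proof (cases "x \<ge> 0")
    case True
    have "trunc K x - x = (of_int \<lfloor>x*K\<rfloor> - x*K) / K" using True K by (simp add: trunc_def field_simps)
    moreover have "\<bar>of_int \<lfloor>x*K\<rfloor> - x*K\<bar> \<le> (1::real)" using a by linarith
    ultimately show ?thesis using K by (simp add: abs_div divide_right_mono)
  next
    case False
    have "trunc K x - x = (of_int \<lceil>x*K\<rceil> - x*K) / K" using False K by (simp add: trunc_def field_simps)
    moreover have "\<bar>of_int \<lceil>x*K\<rceil> - x*K\<bar> \<le> (1::real)" using b by linarith
    ultimately show ?thesis using K by (simp add: abs_div divide_right_mono)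
  qed
qed

lemma trunc_rat: "K \<in> \<rat> \<Longrightarrow> trunc K x \<in> \<rat>"
  unfolding trunc_def by auto


lemma approx_D:
  assumes v: "nsq N v \<le> 1" and e: "e > 0"
  shows "\<exists>w\<in>Dset N. \<bar>qf N A v - qf N A w\<bar> < e"
proof -
  define S where "S = (\<Sum>i<N. \<Sum>j<N. \<bar>A i j\<bar>)"
  have S0: "S \<ge> 0" unfolding S_def by (simp add: sum_nonneg)
  define K :: real where "K = of_nat (nat \<lceil>2*S/e\<rceil> + 1)"
  have K0: "K > 0" unfolding K_def by simp
  have KS: "2*S/e < K" unfolding K_def by linarith
  have KQ: "K \<in> \<rat>" unfolding K_def by simp
  define w where "w = (\<lambda>i. if i < N then trunc K (v i) else 0)"
  have v1: "\<bar>v i\<bar> \<le> 1" if "i < N" for i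
  proof -
    have "(v i)^2 \<le> 1" using nsq_comp_le[OF that, of v] v by linarith
    then show ?thesis using abs_square_le_1 by blast
  qed
  have wv: "\<bar>w i\<bar> \<le> \<bar>v i\<bar>" "\<bar>w i - v i\<bar> \<le> 1/K" if "i < N" for i
    using that trunc_props[OF K0] by (auto simp: w_def)
  have "w \<in> Dset N"
  proof -
    have "nsq N w \<le> nsq N v" unfolding nsq_def
      by (intro sum_mono) (simp add: abs_le_square_iff[symmetric] wv(1))
    then show ?thesis using v KQ by (auto simp: Dset_def w_def trunc_rat)
  qed
  moreover have "\<bar>qf N A v - qf N A w\<bar> < e"
  proof -
    have pt: "\<bar>A i j * v i * v j - A i j * w i * w j\<bar> \<le> \<bar>A i j\<bar> * (2/K)" if "i < N" "j < N" for i j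
    proof -
      have "v i * v j - w i * w j = v i * (v j - w j) + w j * (v i - w i)" by (simp add: algebra_simps)
      then have "\<bar>v i * v j - w i * w j\<bar> \<le> \<bar>v i\<bar> * \<bar>v j - w j\<bar> + \<bar>w j\<bar> * \<bar>v i - w i\<bar>"
        by (metis abs_mult abs_triangle_ineq)
      also have "\<dots> \<le> 1 * (1/K) + 1 * (1/K)"
      proof (rule add_mono)
        show "\<bar>v i\<bar> * \<bar>v j - w j\<bar> \<le> 1 * (1/K)"
          using v1[OF that(1)] wv(2)[OF that(2)] by (intro mult_mono) (auto simp: abs_minus_commute)
        have "\<bar>w j\<bar> \<le> 1" using v1[OF that(2)] wv(1)[OF that(2)] by linarith
        then show "\<bar>w j\<bar> * \<bar>v i - w i\<bar> \<le> 1 * (1/K)"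
          using wv(2)[OF that(1)] by (intro mult_mono) (auto simp: abs_minus_commute)
      qed
      finally have "\<bar>v i * v j - w i * w j\<bar> \<le> 2/K" by simp
      then have "\<bar>A i j\<bar> * \<bar>v i * v j - w i * w j\<bar> \<le> \<bar>A i j\<bar> * (2/K)" by (rule mult_left_mono) simp
      moreover have "\<bar>A i j * v i * v j - A i j * w i * w j\<bar> = \<bar>A i j\<bar> * \<bar>v i * v j - w i * w j\<bar>"
        by (simp add: abs_mult[symmetric] algebra_simps)
      ultimately show ?thesis by simp
    qed
    have "\<bar>qf N A v - qf N A w\<bar> = \<bar>\<Sum>i<N. \<Sum>j<N. A i j * v i * v j - A i j * w i * w j\<bar>"
      unfolding qf_def by (simp add: sum_subtractf)
    also have "\<dots> \<le> (\<Sum>i<N. \<bar>\<Sum>j<N. A i j * v i * v j - A i j * w i * w j\<bar>)" by (rule sum_abs)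
    also have "\<dots> \<le> (\<Sum>i<N. \<Sum>j<N. \<bar>A i j * v i * v j - A i j * w i * w j\<bar>)" by (intro sum_mono sum_abs)
    also have "\<dots> \<le> (\<Sum>i<N. \<Sum>j<N. \<bar>A i j\<bar> * (2/K))" by (intro sum_mono pt) auto
    also have "\<dots> = S * (2/K)" unfolding S_def sum_distrib_right ..
    also have "\<dots> < e" using KS K0 e by (simp add: field_simps)
    finally show ?thesis .
  qed
  ultimately show ?thesis by blast
qed


lemma le_of_approx:
  fixes a m :: real
  assumes "\<And>n::nat. a - 1/(real n + 1) < m"
  shows "a \<le> m"
proof (rule ccontr)
  assume "\<not> a \<le> m"
  then have "0 < a - m" by simp
  then obtain n :: nat where "inverse (real (Suc n)) < a - m"
    using reals_Archimedean by blast
  then have "1/(real n + 1) < a - m" by (simp add: inverse_eq_divide add.commute)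
  then show False using assms[of n] by linarith
qed

lemma event_iff:
  assumes N: "N \<ge> 1" and sym: "\<And>i j. i < N \<Longrightarrow> j < N \<Longrightarrow> A i j = A j i"
  shows "(\<exists>lam. eigenvalue (Mt N A) lam \<and> \<bar>lam\<bar> \<ge> a) \<longleftrightarrow>
         (\<forall>n::nat. \<exists>w\<in>Dset N. a - 1/(real n + 1) < \<bar>qf N A w\<bar>)"
proof
  assume "\<exists>lam. eigenvalue (Mt N A) lam \<and> \<bar>lam\<bar> \<ge> a"
  then obtain lam where l: "eigenvalue (Mt N A) lam" "\<bar>lam\<bar> \<ge> a" by blast
  obtain v where v: "nsq N v = 1" "qf N A v = lam" using eigen_vec[OF l(1)] by blast
  show "\<forall>n::nat. \<exists>w\<in>Dset N. a - 1/(real n + 1) < \<bar>qf N A w\<bar>"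
  proof
    fix n :: nat
    have "nsq N v \<le> 1" "(0::real) < 1/(real n + 1)" using v by auto
    then obtain w where w: "w \<in> Dset N" "\<bar>qf N A v - qf N A w\<bar> < 1/(real n + 1)"
      using approx_D[of N v "1/(real n + 1)" A] by blast
    have "a - 1/(real n + 1) < \<bar>qf N A w\<bar>" using w(2) v(2) l(2) by linarith
    then show "\<exists>w\<in>Dset N. a - 1/(real n + 1) < \<bar>qf N A w\<bar>" using w(1) by blast
  qed
next
  assume h: "\<forall>n::nat. \<exists>w\<in>Dset N. a - 1/(real n + 1) < \<bar>qf N A w\<bar>"
  obtain m where m: "m \<ge> 0" "\<forall>z. \<bar>qf N A z\<bar> \<le> m * nsq N z" "\<exists>lam. eigenvalue (Mt N A) lam \<and> \<bar>lam\<bar> = m"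
    using spec[OF N, of A, OF sym] by blast
  have "a - 1/(real n + 1) < m" for n :: nat
  proof -
    obtain w where w: "w \<in> Dset N" "a - 1/(real n + 1) < \<bar>qf N A w\<bar>" using h by blast
    have "\<bar>qf N A w\<bar> \<le> m * nsq N w" using m by blast
    also have "\<dots> \<le> m * 1" using w(1) m(1) unfolding Dset_def by (intro mult_left_mono) auto
    finally show ?thesis using w(2) by linarith
  qed
  then have "a \<le> m" by (rule le_of_approx)
  then show "\<exists>lam. eigenvalue (Mt N A) lam \<and> \<bar>lam\<bar> \<ge> a" using m(3) by (metis order_trans order_refl)
qed

lemma eucl_norm_nsq: "eucl_norm N z = sqrt (nsq N z)"
  by (simp add: eucl_norm_def nsq_def)

lemma meas_eucl_norm[measurable]: "eucl_norm N \<in> borel_measurable (PiM {..<N} (\<lambda>_. lborel))"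
  unfolding eucl_norm_def by measurable

lemma meas_T: "(\<lambda>z. restrict (\<lambda>i. r * z i / eucl_norm N z) {..<N})
   \<in> measurable (PiM {..<N} (\<lambda>_. lborel)) (PiM {..<N} (\<lambda>_. borel))"
  by measurable

lemma ball_sets: "{z \<in> space (PiM {..<N} (\<lambda>_. lborel)). eucl_norm N z \<le> 1} \<in> sets (PiM {..<N} (\<lambda>_. lborel))"
  by measurable

interpretation PS: product_sigma_finite "\<lambda>_::nat. lborel :: real measure"
  by standard

lemma ball_fin: "emeasure (PiM {..<N} (\<lambda>_. lborel)) {z \<in> space (PiM {..<N} (\<lambda>_. lborel)). eucl_norm N z \<le> 1} \<noteq> \<infinity>"
proof -
  let ?L = "PiM {..<N} (\<lambda>_. lborel)"
  have sub: "{z \<in> space ?L. eucl_norm N z \<le> 1} \<subseteq> PiE {..<N} (\<lambda>_. {-1..1::real})"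
  proof
    fix z assume z: "z \<in> {z \<in> space ?L. eucl_norm N z \<le> 1}"
    have "\<bar>z i\<bar> \<le> 1" if "i < N" for i
    proof -
      have "(z i)^2 \<le> nsq N z" by (rule nsq_comp_le[OF that])
      also have "\<dots> \<le> 1" using z by (simp add: eucl_norm_nsq)
      finally show ?thesis using abs_square_le_1 by blast
    qed
    then show "z \<in> PiE {..<N} (\<lambda>_. {-1..1::real})" using z by (auto simp: space_PiM PiE_iff abs_le_iff)
  qed
  have "emeasure ?L {z \<in> space ?L. eucl_norm N z \<le> 1} \<le> emeasure ?L (PiE {..<N} (\<lambda>_. {-1..1::real}))"
    by (rule emeasure_mono[OF sub]) (simp add: sets_PiM_I_finite)
  also have "\<dots> = (\<Prod>i<N. emeasure lborel {-1..1::real})" by (rule PS.emeasure_PiM) auto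
  also have "\<dots> = ennreal 2 ^ N" by simp
  also have "\<dots> = ennreal (2 ^ N)" by (rule ennreal_power) simp
  finally have le: "emeasure ?L {z \<in> space ?L. eucl_norm N z \<le> 1} \<le> ennreal (2 ^ N)" .
  show ?thesis
  proof
    assume "emeasure ?L {z \<in> space ?L. eucl_norm N z \<le> 1} = \<infinity>"
    then have "ennreal (2 ^ N) = \<infinity>" using le by (simp add: top_unique)
    then show False by simp
  qed
qed

lemma ball_pos: assumes N: "N \<ge> 1"
  shows "emeasure (PiM {..<N} (\<lambda>_. lborel)) {z \<in> space (PiM {..<N} (\<lambda>_. lborel)). eucl_norm N z \<le> 1} \<noteq> 0"
proof -
  let ?L = "PiM {..<N} (\<lambda>_. lborel)"
  have sub: "PiE {..<N} (\<lambda>_. {0..1/real N}) \<subseteq> {z \<in> space ?L. eucl_norm N z \<le> 1}"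
  proof
    fix z assume z: "z \<in> PiE {..<N} (\<lambda>_. {0..1/real N})"
    have "nsq N z \<le> (\<Sum>i<N. (1/real N)^2)" unfolding nsq_def
      using z by (intro sum_mono power_mono) (auto simp: PiE_iff)
    also have "\<dots> = 1 / real N" using N by (simp add: power2_eq_square)
    also have "\<dots> \<le> 1" using N by simp
    finally show "z \<in> {z \<in> space ?L. eucl_norm N z \<le> 1}" using z
      by (auto simp: eucl_norm_nsq space_PiM PiE_iff)
  qed
  have "(\<Prod>i<N. emeasure lborel {0..1/real N}) = emeasure ?L (PiE {..<N} (\<lambda>_. {0..1/real N}))"
    by (rule PS.emeasure_PiM[symmetric]) auto
  also have "\<dots> \<le> emeasure ?L {z \<in> space ?L. eucl_norm N z \<le> 1}"
    by (rule emeasure_mono[OF sub ball_sets])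
  finally have le: "ennreal (1/real N) ^ N \<le> emeasure ?L {z \<in> space ?L. eucl_norm N z \<le> 1}" by simp
  have ne: "ennreal (1/real N) ^ N \<noteq> 0" using N by (simp add: ennreal_eq_0_iff)
  show ?thesis
  proof
    assume "emeasure ?L {z \<in> space ?L. eucl_norm N z \<le> 1} = 0"
    then have "ennreal (1/real N) ^ N \<le> 0" using le by (simp only:)
    then show False using ne by (simp only: le_zero_eq)
  qed
qed
lemma prob_U: assumes "N \<ge> 1"
  shows "prob_space (uniform_measure (PiM {..<N} (\<lambda>_. lborel)) {z \<in> space (PiM {..<N} (\<lambda>_. lborel)). eucl_norm N z \<le> 1})"
  by (rule prob_space_uniform_measure[OF ball_pos[OF assms] ball_fin])

lemma meas_T_U: "(\<lambda>z. restrict (\<lambda>i. r * z i / eucl_norm N z) {..<N})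
   \<in> measurable (uniform_measure (PiM {..<N} (\<lambda>_. lborel)) {z \<in> space (PiM {..<N} (\<lambda>_. lborel)). eucl_norm N z \<le> 1}) (PiM {..<N} (\<lambda>_. borel))"
  using meas_T by (subst measurable_cong_sets[OF sets_uniform_measure refl]) auto

lemma prob_sigma: assumes "N \<ge> 1" shows "prob_space (sigma_RN R N)"
  unfolding sigma_RN_def unif_sphere_def
  by (rule prob_space.prob_space_distr[OF prob_U[OF assms] meas_T_U])

lemma sets_sigma: "sets (sigma_RN R N) = sets (PiM {..<N} (\<lambda>_. borel))"
  unfolding sigma_RN_def unif_sphere_def by simp

lemma ham_qf: "hamiltonian N J w = - qf N (\<lambda>i j. J i j / sqrt (real N)) w"
  unfolding hamiltonian_def qf_def by (simp add: sum_distrib_left algebra_simps sum_negf)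

lemma nsq_T: "nsq N (\<lambda>i. r * z i / eucl_norm N z) \<le> r^2"
proof (cases "nsq N z = 0")
  case True
  then show ?thesis by (simp add: eucl_norm_nsq nsq_def)
next
  case False
  then have p: "nsq N z > 0" using nsq_nonneg[of N z] by simp
  have "nsq N (\<lambda>i. r * z i / eucl_norm N z) = nsq N (\<lambda>i. (r / eucl_norm N z) * z i)" by simp
  also have "\<dots> = (r / eucl_norm N z)^2 * nsq N z" by (rule nsq_scale)
  also have "\<dots> = r^2" using p by (simp add: eucl_norm_nsq power_divide)
  finally show ?thesis by simp
qed

lemma meas_quad: fixes c :: "nat \<Rightarrow> nat \<Rightarrow> real" shows "(\<lambda>w. \<Sum>i<N. \<Sum>j<N. c i j * w i * w j) \<in> borel_measurable (PiM {..<N} (\<lambda>_. borel))"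
proof (intro borel_measurable_sum)
  fix i j :: nat assume "i \<in> {..<N}" "j \<in> {..<N}"
  then have [measurable]: "(\<lambda>w. w i) \<in> borel_measurable (PiM {..<N} (\<lambda>_. borel))"
    "(\<lambda>w. w j) \<in> borel_measurable (PiM {..<N} (\<lambda>_. borel :: real measure))"
    by (auto intro: measurable_component_singleton)
  show "(\<lambda>w. c i j * w i * w j) \<in> borel_measurable (PiM {..<N} (\<lambda>_. borel))" by measurable
qed

lemma Z_bounds:
  assumes N: "N \<ge> 1" and b: "\<beta> \<ge> 0" and m: "\<And>z. \<bar>qf N (\<lambda>i j. J i j / sqrt (real N)) z\<bar> \<le> m * nsq N z"
    and m0: "m \<ge> 0"
  shows "exp (- (\<beta> * m * R^2 * real N)) \<le> Z_sf N \<beta> R J \<and> Z_sf N \<beta> R J \<le> exp (\<beta> * m * R^2 * real N)"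
proof -
  let ?A = "\<lambda>i j. J i j / sqrt (real N)"
  let ?L = "PiM {..<N} (\<lambda>_. lborel)"
  let ?U = "uniform_measure ?L {z \<in> space ?L. eucl_norm N z \<le> 1}"
  let ?r = "R * sqrt (real N)"
  let ?T = "\<lambda>z. restrict (\<lambda>i. ?r * z i / eucl_norm N z) {..<N}"
  let ?f = "\<lambda>w. exp (- \<beta> * hamiltonian N J w)"
  interpret U: prob_space ?U by (rule prob_U[OF N])
  have fm: "?f \<in> borel_measurable (PiM {..<N} (\<lambda>_. borel))"
  proof -
    have "(\<lambda>w. \<Sum>i<N. \<Sum>j<N. J i j * w i * w j) \<in> borel_measurable (PiM {..<N} (\<lambda>_. borel))"
      by (rule meas_quad)
    then show ?thesis unfolding hamiltonian_def by measurable
  qed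
  have Z: "Z_sf N \<beta> R J = (\<integral>z. ?f (?T z) \<partial>?U)"
    unfolding Z_sf_def sigma_RN_def unif_sphere_def
    by (rule integral_distr[OF meas_T_U fm])
  have r2: "?r^2 = R^2 * real N" by (simp add: power_mult_distrib)
  have bd: "\<bar>\<beta> * qf N ?A (?T z)\<bar> \<le> \<beta> * m * R^2 * real N" for z
  proof -
    have "qf N ?A (?T z) = qf N ?A (\<lambda>i. ?r * z i / eucl_norm N z)" by (rule qf_cong) simp
    moreover have "nsq N (\<lambda>i. ?r * z i / eucl_norm N z) \<le> ?r^2" by (rule nsq_T)
    ultimately have "\<bar>qf N ?A (?T z)\<bar> \<le> m * ?r^2"
    proof -
      assume e: "qf N ?A (?T z) = qf N ?A (\<lambda>i. ?r * z i / eucl_norm N z)"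
        and n: "nsq N (\<lambda>i. ?r * z i / eucl_norm N z) \<le> ?r^2"
      have "m * nsq N (\<lambda>i. ?r * z i / eucl_norm N z) \<le> m * ?r^2" using n m0 by (rule mult_left_mono)
      then show ?thesis using e m[of "\<lambda>i. ?r * z i / eucl_norm N z"] by linarith
    qed
    then have "\<beta> * \<bar>qf N ?A (?T z)\<bar> \<le> \<beta> * (m * ?r^2)" using b by (rule mult_left_mono)
    then show ?thesis using b r2 by (simp add: abs_mult mult.assoc)
  qed
  have fT: "?f (?T z) = exp (\<beta> * qf N ?A (?T z))" for z by (simp add: ham_qf)
  have lo: "exp (- (\<beta> * m * R^2 * real N)) \<le> ?f (?T z)" for z
    unfolding fT using bd[of z] by (simp add: abs_le_iff)
  have hi: "?f (?T z) \<le> exp (\<beta> * m * R^2 * real N)" for z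
    unfolding fT using bd[of z] by (simp add: abs_le_iff)
  have int: "integrable ?U (\<lambda>z. ?f (?T z))"
  proof (rule U.integrable_const_bound[where B="exp (\<beta> * m * R^2 * real N)"])
    show "AE x in ?U. norm (?f (?T x)) \<le> exp (\<beta> * m * R^2 * real N)" using hi by simp
    show "(\<lambda>z. ?f (?T z)) \<in> borel_measurable ?U"
      using measurable_comp[OF meas_T_U fm] by (simp add: comp_def)
  qed
  show ?thesis unfolding Z
    using U.integral_ge_const[OF int] U.integral_le_const[OF int] lo hi by simp
qed

lemma meas_joint:
  fixes a :: "'w \<Rightarrow> nat \<Rightarrow> nat \<Rightarrow> real"
  assumes am: "\<And>i j. (\<lambda>\<omega>. a \<omega> i j) \<in> borel_measurable M"
  shows "(\<lambda>x. \<Sum>i<N. \<Sum>j<N. a (fst x) i j * snd x i * snd x j) \<in> borel_measurable (M \<Otimes>\<^sub>M PiM {..<N} (\<lambda>_. borel))"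
proof (intro borel_measurable_sum)
  fix i j :: nat assume "i \<in> {..<N}" "j \<in> {..<N}"
  then have [measurable]: "(\<lambda>w. w i) \<in> borel_measurable (PiM {..<N} (\<lambda>_. borel))"
    "(\<lambda>w. w j) \<in> borel_measurable (PiM {..<N} (\<lambda>_. borel :: real measure))"
    by (auto intro: measurable_component_singleton)
  have [measurable]: "(\<lambda>\<omega>. a \<omega> i j) \<in> borel_measurable M" by (rule am)
  show "(\<lambda>x. a (fst x) i j * snd x i * snd x j) \<in> borel_measurable (M \<Otimes>\<^sub>M PiM {..<N} (\<lambda>_. borel))"
    by measurable
qed

lemma Z_meas:
  fixes J :: "'w \<Rightarrow> nat \<Rightarrow> nat \<Rightarrow> real"
  assumes N: "N \<ge> 1" and am: "\<And>i j. (\<lambda>\<omega>. J \<omega> i j) \<in> borel_measurable M"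
  shows "(\<lambda>\<omega>. Z_sf N \<beta> R (J \<omega>)) \<in> borel_measurable M"
proof -
  interpret S: prob_space "sigma_RN R N" by (rule prob_sigma[OF N])
  have "(\<lambda>x. \<Sum>i<N. \<Sum>j<N. J (fst x) i j * snd x i * snd x j) \<in> borel_measurable (M \<Otimes>\<^sub>M PiM {..<N} (\<lambda>_. borel))"
    by (rule meas_joint[OF am])
  then have "(\<lambda>x. exp (- \<beta> * hamiltonian N (J (fst x)) (snd x))) \<in> borel_measurable (M \<Otimes>\<^sub>M PiM {..<N} (\<lambda>_. borel))"
    unfolding hamiltonian_def by measurable
  then have "(\<lambda>x. exp (- \<beta> * hamiltonian N (J (fst x)) (snd x))) \<in> borel_measurable (M \<Otimes>\<^sub>M sigma_RN R N)"
    by (subst measurable_cong_sets[OF sets_pair_measure_cong[OF refl sets_sigma] refl])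
  then have "case_prod (\<lambda>\<omega> w. exp (- \<beta> * hamiltonian N (J \<omega>) w)) \<in> borel_measurable (M \<Otimes>\<^sub>M sigma_RN R N)"
    by (simp add: case_prod_beta')
  then show ?thesis unfolding Z_sf_def by (rule S.borel_measurable_lebesgue_integral)
qed

lemma scaled_Mt: "scaled_mat N J = Mt N (\<lambda>i j. J i j / sqrt (real N))"
  by (simp add: scaled_mat_def Mt_def)

lemma E_meas:
  fixes J :: "'w \<Rightarrow> nat \<Rightarrow> nat \<Rightarrow> real"
  assumes N: "N \<ge> 1" and am: "\<And>i j. (\<lambda>\<omega>. J \<omega> i j) \<in> borel_measurable M"
    and sym: "\<And>\<omega> i j. J \<omega> i j = J \<omega> j i"
  shows "{\<omega> \<in> space M. \<exists>lam. eigenvalue (scaled_mat N (J \<omega>)) lam \<and> \<bar>lam\<bar> \<ge> a} \<in> sets M"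
proof -
  have eq: "{\<omega> \<in> space M. \<exists>lam. eigenvalue (scaled_mat N (J \<omega>)) lam \<and> \<bar>lam\<bar> \<ge> a} =
     {\<omega> \<in> space M. \<forall>n::nat. \<exists>w\<in>Dset N. a - 1/(real n + 1) < \<bar>qf N (\<lambda>i j. J \<omega> i j / sqrt (real N)) w\<bar>}"
    unfolding scaled_Mt using event_iff[OF N, of "\<lambda>i j. J _ i j / sqrt (real N)"] sym by auto
  have [measurable]: "(\<lambda>\<omega>. J \<omega> i j) \<in> borel_measurable M" for i j by (rule am)
  have m: "Measurable.pred M (\<lambda>\<omega>. a - 1/(real n + 1) < \<bar>qf N (\<lambda>i j. J \<omega> i j / sqrt (real N)) w\<bar>)" for n w
    unfolding qf_def by measurable
  have "Measurable.pred M (\<lambda>\<omega>. \<forall>n::nat. \<exists>w\<in>Dset N. a - 1/(real n + 1) < \<bar>qf N (\<lambda>i j. J \<omega> i j / sqrt (real N)) w\<bar>)"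
  proof (intro pred_intros_countable)
    fix n :: nat
    show "Measurable.pred M (\<lambda>\<omega>. \<exists>w\<in>Dset N. a - 1/(real n + 1) < \<bar>qf N (\<lambda>i j. J \<omega> i j / sqrt (real N)) w\<bar>)"
      unfolding pred_def
      by (rule sets.sets_Collect_countable_Ex'[OF _ countable_Dset]) (use m in \<open>simp add: pred_def\<close>)
  qed
  then show ?thesis unfolding eq by (simp add: pred_def)
qed

lemma quad_bound:
  fixes c a t :: real assumes t: "t > 0"
  shows "c * a - t * a^2 \<le> c^2 / (4*t)"
proof -
  have "0 \<le> (c - 2*t*a)^2 / (4*t)" using t by simp
  also have "(c - 2*t*a)^2 / (4*t) = c^2/(4*t) - (c * a - t * a^2)"
    using t by (simp add: field_simps power2_eq_square)
  finally show ?thesis by simp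
qed

lemma term_bound:
  fixes c a0 \<delta> \<epsilon> \<theta> C1 :: real and N k :: nat
  assumes N: "N \<ge> 1" and c: "c > 0" and a0: "a0 > 0" and d: "\<delta> > 0" and e: "0 < \<epsilon>" "\<epsilon> < \<theta>" and C1: "C1 \<ge> 0"
  shows "exp (c * real N * (a0 + (real k + 1) * \<delta>)) * (C1 * exp (- \<theta> * (a0 + real k * \<delta>)^2 * real N))
     \<le> C1 * exp (real N * (c * \<delta> + c^2 / (4*(\<theta> - \<epsilon>)))) * exp (- \<epsilon> * a0 * \<delta>) ^ k"
proof -
  define a where "a = a0 + real k * \<delta>"
  have a0le: "a0 \<le> a" using d unfolding a_def by simp
  have ak: "a^2 \<ge> a0 * \<delta> * real k"
  proof -
    have "a^2 = a * a" by (simp add: power2_eq_square)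
    also have "a * a \<ge> a0 * a" using a0le a0 by (intro mult_right_mono) auto
    finally have "a^2 \<ge> a0 * a" .
    moreover have "a0 * a \<ge> a0 * (real k * \<delta>)" using a0 unfolding a_def by (intro mult_left_mono) auto
    ultimately show ?thesis by (simp add: algebra_simps)
  qed
  have q: "c * a - (\<theta> - \<epsilon>) * a^2 \<le> c^2 / (4*(\<theta> - \<epsilon>))" by (rule quad_bound) (use e in simp)
  have "real N * (\<epsilon> * a^2) \<ge> 1 * (\<epsilon> * a^2)" using N e by (intro mult_right_mono) auto
  moreover have "\<epsilon> * a^2 \<ge> \<epsilon> * (a0 * \<delta> * real k)" using ak e by (intro mult_left_mono) auto
  ultimately have "c * real N * (a + \<delta>) + (- \<theta> * a^2 * real N)
      \<le> real N * (c * \<delta> + c^2 / (4*(\<theta> - \<epsilon>))) + (- \<epsilon> * a0 * \<delta> * real k)"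
  proof -
    assume h1: "real N * (\<epsilon> * a^2) \<ge> 1 * (\<epsilon> * a^2)" and h2: "\<epsilon> * a^2 \<ge> \<epsilon> * (a0 * \<delta> * real k)"
    have "real N * (c * a - (\<theta> - \<epsilon>) * a^2) \<le> real N * (c^2 / (4*(\<theta> - \<epsilon>)))"
      using q N by (intro mult_left_mono) auto
    then show ?thesis using h1 h2 by (simp add: algebra_simps)
  qed
  then have "exp (c * real N * (a + \<delta>) + (- \<theta> * a^2 * real N))
      \<le> exp (real N * (c * \<delta> + c^2 / (4*(\<theta> - \<epsilon>))) + (- \<epsilon> * a0 * \<delta> * real k))" by simp
  then have "exp (c * real N * (a + \<delta>)) * exp (- \<theta> * a^2 * real N)
      \<le> exp (real N * (c * \<delta> + c^2 / (4*(\<theta> - \<epsilon>)))) * exp (- \<epsilon> * a0 * \<delta> * real k)"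
    by (simp only: exp_add[symmetric])
  moreover have "exp (- \<epsilon> * a0 * \<delta> * real k) = exp (- \<epsilon> * a0 * \<delta>) ^ k"
    by (simp add: exp_of_nat_mult[symmetric] mult.commute)
  ultimately have "exp (c * real N * (a + \<delta>)) * exp (- \<theta> * a^2 * real N)
      \<le> exp (real N * (c * \<delta> + c^2 / (4*(\<theta> - \<epsilon>)))) * exp (- \<epsilon> * a0 * \<delta>) ^ k" by simp
  then have "C1 * (exp (c * real N * (a + \<delta>)) * exp (- \<theta> * a^2 * real N))
      \<le> C1 * (exp (real N * (c * \<delta> + c^2 / (4*(\<theta> - \<epsilon>)))) * exp (- \<epsilon> * a0 * \<delta>) ^ k)"
    using C1 by (rule mult_left_mono)
  moreover have "a0 + (real k + 1) * \<delta> = a + \<delta>" unfolding a_def by (simp add: algebra_simps)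
  ultimately show ?thesis unfolding a_def by (simp add: algebra_simps)
qed

lemma single_le_suminf: "(f::nat \<Rightarrow> ennreal) k \<le> suminf f"
  using sum_le_suminf[of f "{k}"] by simp

lemma EZ_bound:
  fixes M :: "'w measure" and Z m :: "'w \<Rightarrow> real"
  assumes prob: "prob_space M" and Zm: "Z \<in> borel_measurable M"
    and Zb: "\<And>\<omega>. \<omega> \<in> space M \<Longrightarrow> 0 \<le> Z \<omega> \<and> Z \<omega> \<le> exp (c * real N * m \<omega>)"
    and Es: "\<And>a. {\<omega> \<in> space M. a \<le> m \<omega>} \<in> sets M"
    and tail: "\<And>a. a > lb \<Longrightarrow> measure M {\<omega> \<in> space M. a \<le> m \<omega>} \<le> C1 * exp (- \<theta> * a^2 * real N)"
    and N: "N \<ge> 1" and c: "c > 0" and lb: "lb \<ge> 0" and a0: "a0 > lb" and d: "\<delta> > 0"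
    and e: "0 < \<epsilon>" "\<epsilon> < \<theta>" and C1: "C1 \<ge> 0"
  shows "integrable M Z \<and> (\<integral>\<omega>. Z \<omega> \<partial>M) \<le> exp (c * real N * a0)
      + C1 * exp (real N * (c * \<delta> + c^2 / (4*(\<theta> - \<epsilon>)))) / (1 - exp (- \<epsilon> * a0 * \<delta>))"
proof -
  interpret P: prob_space M by (rule prob)
  define ee where "ee = (\<lambda>k::nat. exp (c * real N * (a0 + (real k + 1) * \<delta>)))"
  define E where "E = (\<lambda>k::nat. {\<omega> \<in> space M. a0 + real k * \<delta> \<le> m \<omega>})"
  define r where "r = exp (- \<epsilon> * a0 * \<delta>)"
  define K where "K = C1 * exp (real N * (c * \<delta> + c^2 / (4*(\<theta> - \<epsilon>))))"
  have a0p: "a0 > 0" using a0 lb by linarith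
  have r: "0 < r" "r < 1" unfolding r_def using e a0p d by auto
  have K0: "K \<ge> 0" unfolding K_def using C1 by simp
  have ES: "E k \<in> sets M" for k unfolding E_def by (rule Es)
  have pt: "ennreal (Z \<omega>) \<le> ennreal (exp (c * real N * a0)) + (\<Sum>k. ennreal (ee k) * indicator (E k) \<omega>)"
    if w: "\<omega> \<in> space M" for \<omega>
  proof (cases "m \<omega> < a0")
    case True
    have "Z \<omega> \<le> exp (c * real N * m \<omega>)" using Zb[OF w] by simp
    also have "\<dots> \<le> exp (c * real N * a0)" using True c N by (intro exp_mono mult_left_mono) auto
    finally have "ennreal (Z \<omega>) \<le> ennreal (exp (c * real N * a0))" by (rule ennreal_leI)
    then show ?thesis by (rule add_increasing2[rotated]) simp
  next
    case False
    define k where "k = nat \<lfloor>(m \<omega> - a0) / \<delta>\<rfloor>"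
    have fl: "of_int \<lfloor>(m \<omega> - a0) / \<delta>\<rfloor> \<le> (m \<omega> - a0) / \<delta>" "(m \<omega> - a0) / \<delta> < of_int \<lfloor>(m \<omega> - a0) / \<delta>\<rfloor> + 1"
      by linarith+
    have nn: "0 \<le> \<lfloor>(m \<omega> - a0) / \<delta>\<rfloor>" using False d by simp
    have kk: "real k = of_int \<lfloor>(m \<omega> - a0) / \<delta>\<rfloor>" unfolding k_def using nn by simp
    have lo: "a0 + real k * \<delta> \<le> m \<omega>" using fl(1) d unfolding kk by (simp add: le_divide_eq algebra_simps)
    have hi: "m \<omega> < a0 + (real k + 1) * \<delta>" using fl(2) d unfolding kk by (simp add: divide_less_eq algebra_simps)
    have "Z \<omega> \<le> exp (c * real N * m \<omega>)" using Zb[OF w] by simp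
    also have "\<dots> \<le> ee k" unfolding ee_def using hi c N by (intro exp_mono mult_left_mono) auto
    finally have "ennreal (Z \<omega>) \<le> ennreal (ee k) * indicator (E k) \<omega>"
      using lo w by (simp add: E_def ennreal_leI)
    also have "\<dots> \<le> (\<Sum>j. ennreal (ee j) * indicator (E j) \<omega>)"
      by (rule single_le_suminf)
    finally show ?thesis by (rule add_increasing[rotated]) simp
  qed
  have "(\<integral>\<^sup>+\<omega>. ennreal (Z \<omega>) \<partial>M) \<le> (\<integral>\<^sup>+\<omega>. ennreal (exp (c * real N * a0)) + (\<Sum>k. ennreal (ee k) * indicator (E k) \<omega>) \<partial>M)"
    by (rule nn_integral_mono) (rule pt)
  also have "\<dots> = ennreal (exp (c * real N * a0)) + (\<Sum>k. ennreal (ee k) * emeasure M (E k))"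
    using ES by (simp add: nn_integral_add nn_integral_suminf nn_integral_cmult_indicator P.emeasure_space_1)
  also have "(\<Sum>k. ennreal (ee k) * emeasure M (E k)) \<le> (\<Sum>k. ennreal (K * r^k))"
  proof (rule suminf_le)
    fix k :: nat
    have "real k * \<delta> \<ge> 0" using d by simp
    then have "a0 + real k * \<delta> > lb" using a0 by linarith
    then have t: "measure M (E k) \<le> C1 * exp (- \<theta> * (a0 + real k * \<delta>)^2 * real N)" unfolding E_def by (rule tail)
    have "ennreal (ee k) * emeasure M (E k) = ennreal (ee k * measure M (E k))"
      by (simp add: P.emeasure_eq_measure ennreal_mult'' ee_def)
    also have "\<dots> \<le> ennreal (ee k * (C1 * exp (- \<theta> * (a0 + real k * \<delta>)^2 * real N)))"
      using t by (intro ennreal_leI mult_left_mono) (auto simp: ee_def)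
    also have "\<dots> \<le> ennreal (K * r^k)" unfolding ee_def K_def r_def
      by (intro ennreal_leI term_bound N c a0p d e C1)
    finally show "ennreal (ee k) * emeasure M (E k) \<le> ennreal (K * r^k)" .
  qed auto
  also have "(\<Sum>k. ennreal (K * r^k)) = ennreal (K / (1 - r))"
  proof -
    have s: "summable (\<lambda>k. K * r^k)" using r by (intro summable_mult summable_geometric) simp
    have "(\<Sum>k. ennreal (K * r^k)) = ennreal (\<Sum>k. K * r^k)"
      by (rule suminf_ennreal2[OF _ s]) (use K0 r in simp)
    also have "(\<Sum>k. K * r^k) = K / (1 - r)" using r
      by (simp add: suminf_mult summable_geometric suminf_geometric)
    finally show ?thesis .
  qed
  finally have nnb: "(\<integral>\<^sup>+\<omega>. ennreal (Z \<omega>) \<partial>M) \<le> ennreal (exp (c * real N * a0) + K / (1 - r))"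
    using K0 r by (simp add: ennreal_plus)
  have int: "integrable M Z"
    by (rule integrableI_nonneg[OF Zm]) (use Zb nnb in \<open>auto intro: le_less_trans simp: AE_I2\<close>)
  have "(\<integral>\<omega>. Z \<omega> \<partial>M) = enn2real (\<integral>\<^sup>+\<omega>. ennreal (Z \<omega>) \<partial>M)"
    by (rule integral_eq_nn_integral[OF Zm]) (use Zb in \<open>simp add: AE_I2\<close>)
  also have "\<dots> \<le> enn2real (ennreal (exp (c * real N * a0) + K / (1 - r)))"
    by (rule enn2real_mono[OF nnb]) simp
  also have "\<dots> = exp (c * real N * a0) + K / (1 - r)"
  proof (rule enn2real_ennreal)
    have "K / (1 - r) \<ge> 0" using K0 r by simp
    then show "0 \<le> exp (c * real N * a0) + K / (1 - r)" by (simp add: add_nonneg_nonneg)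
  qed
  finally show ?thesis using int unfolding K_def r_def by simp
qed

definition specm :: "nat \<Rightarrow> (nat \<Rightarrow> nat \<Rightarrow> real) \<Rightarrow> real" where
  "specm N A = (SOME m. m \<ge> 0 \<and> (\<forall>z. \<bar>qf N A z\<bar> \<le> m * nsq N z) \<and> (\<exists>lam. eigenvalue (Mt N A) lam \<and> \<bar>lam\<bar> = m)
     \<and> (\<forall>lam. eigenvalue (Mt N A) lam \<longrightarrow> \<bar>lam\<bar> \<le> m))"

lemma specm:
  assumes N: "N \<ge> 1" and sym: "\<And>i j. i < N \<Longrightarrow> j < N \<Longrightarrow> A i j = A j i"
  shows "specm N A \<ge> 0 \<and> (\<forall>z. \<bar>qf N A z\<bar> \<le> specm N A * nsq N z) \<and> (\<exists>lam. eigenvalue (Mt N A) lam \<and> \<bar>lam\<bar> = specm N A)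
     \<and> (\<forall>lam. eigenvalue (Mt N A) lam \<longrightarrow> \<bar>lam\<bar> \<le> specm N A)"
  unfolding specm_def by (rule someI_ex[OF spec[OF N, of A, OF sym]])

lemma specm_event:
  assumes N: "N \<ge> 1" and sym: "\<And>i j. i < N \<Longrightarrow> j < N \<Longrightarrow> A i j = A j i"
  shows "(\<exists>lam. eigenvalue (Mt N A) lam \<and> \<bar>lam\<bar> \<ge> a) \<longleftrightarrow> a \<le> specm N A"
  using specm[OF N, of A, OF sym] by (metis order_trans order_refl)

lemma qf_abs_le:
  assumes "nsq N v \<le> 1"
  shows "\<bar>qf N A v\<bar> \<le> (\<Sum>i<N. \<Sum>j<N. \<bar>A i j\<bar>)"
proof -
  have v1: "\<bar>v i\<bar> \<le> 1" if "i < N" for i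
  proof -
    have "(v i)^2 \<le> 1" using nsq_comp_le[OF that, of v] assms by linarith
    then show ?thesis using abs_square_le_1 by blast
  qed
  have "\<bar>qf N A v\<bar> \<le> (\<Sum>i<N. \<bar>\<Sum>j<N. A i j * v i * v j\<bar>)" unfolding qf_def by (rule sum_abs)
  also have "\<dots> \<le> (\<Sum>i<N. \<Sum>j<N. \<bar>A i j * v i * v j\<bar>)" by (intro sum_mono sum_abs)
  also have "\<dots> \<le> (\<Sum>i<N. \<Sum>j<N. \<bar>A i j\<bar>)"
  proof (intro sum_mono)
    fix i j assume "i \<in> {..<N}" "j \<in> {..<N}"
    then have "\<bar>v i\<bar> * \<bar>v j\<bar> \<le> 1 * 1" using v1 by (intro mult_mono) auto
    then have "\<bar>A i j\<bar> * (\<bar>v i\<bar> * \<bar>v j\<bar>) \<le> \<bar>A i j\<bar> * 1" by (intro mult_left_mono) auto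
    then show "\<bar>A i j * v i * v j\<bar> \<le> \<bar>A i j\<bar>" by (simp add: abs_mult mult.assoc)
  qed
  finally show ?thesis .
qed

lemma specm_le:
  assumes N: "N \<ge> 1" and sym: "\<And>i j. i < N \<Longrightarrow> j < N \<Longrightarrow> A i j = A j i"
  shows "specm N A \<le> (\<Sum>i<N. \<Sum>j<N. \<bar>A i j\<bar>)"
proof -
  obtain lam where l: "eigenvalue (Mt N A) lam" "\<bar>lam\<bar> = specm N A" using specm[OF N, of A, OF sym] by blast
  obtain v where "nsq N v = 1" "qf N A v = lam" using eigen_vec[OF l(1)] by blast
  then show ?thesis using qf_abs_le[of N v A] l(2) by simp
qed



lemma perN:
  fixes M :: "'w measure" and Jn :: "'w \<Rightarrow> nat \<Rightarrow> nat \<Rightarrow> real"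
  assumes prob: "prob_space M"
    and meas: "\<And>i j. (\<lambda>\<omega>. Jn \<omega> i j) \<in> borel_measurable M"
    and symm: "\<And>\<omega> i j. Jn \<omega> i j = Jn \<omega> j i"
    and intg: "\<And>i j. i < N \<Longrightarrow> j < N \<Longrightarrow> integrable M (\<lambda>\<omega>. Jn \<omega> i j)"
    and H1: "\<And>a. a > lb \<Longrightarrow>
        measure M {\<omega> \<in> space M. \<exists>ev. eigenvalue (scaled_mat N (Jn \<omega>)) ev \<and> \<bar>ev\<bar> \<ge> a} \<le> C1 * exp (- \<theta> * a\<^sup>2 * real N)"
    and N: "N \<ge> 1" and b: "\<beta> > 0" and R: "R > 0" and lb: "lb > 0" and C1: "C1 > 0" and th: "\<theta> > 0"
  shows "(\<integral>\<omega>. ln (Z_sf N \<beta> R (Jn \<omega>)) \<partial>M) \<le> ln (\<integral>\<omega>. Z_sf N \<beta> R (Jn \<omega>) \<partial>M)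
    \<and> (\<forall>a0 \<delta> \<epsilon>. a0 > lb \<longrightarrow> \<delta> > 0 \<longrightarrow> 0 < \<epsilon> \<longrightarrow> \<epsilon> < \<theta> \<longrightarrow>
        ln (\<integral>\<omega>. Z_sf N \<beta> R (Jn \<omega>) \<partial>M) \<le> ln (1 + C1 / (1 - exp (- \<epsilon> * a0 * \<delta>)))
           + real N * max (\<beta> * R^2 * a0) (\<beta> * R^2 * \<delta> + (\<beta> * R^2)^2 / (4*(\<theta> - \<epsilon>))))"
proof -
  interpret P: prob_space M by (rule prob)
  define A where "A = (\<lambda>\<omega> i j. Jn \<omega> i j / sqrt (real N))"
  define m where "m = (\<lambda>\<omega>. specm N (A \<omega>))"
  define Z where "Z = (\<lambda>\<omega>. Z_sf N \<beta> R (Jn \<omega>))"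
  define c where "c = \<beta> * R^2"
  have c: "c > 0" unfolding c_def using b R by simp
  have symA: "\<And>i j. i < N \<Longrightarrow> j < N \<Longrightarrow> A \<omega> i j = A \<omega> j i" for \<omega> unfolding A_def using symm by simp
  have sp: "m \<omega> \<ge> 0 \<and> (\<forall>z. \<bar>qf N (A \<omega>) z\<bar> \<le> m \<omega> * nsq N z)" for \<omega>
    using specm[OF N, of "A \<omega>", OF symA] unfolding m_def by blast
  have Zb: "exp (- (c * real N * m \<omega>)) \<le> Z \<omega> \<and> Z \<omega> \<le> exp (c * real N * m \<omega>)" for \<omega>
  proof -
    have "exp (- (\<beta> * m \<omega> * R^2 * real N)) \<le> Z \<omega> \<and> Z \<omega> \<le> exp (\<beta> * m \<omega> * R^2 * real N)"
      unfolding Z_def by (rule Z_bounds[OF N]) (use b sp[of \<omega>] in \<open>auto simp: A_def\<close>)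
    moreover have "\<beta> * m \<omega> * R^2 * real N = c * real N * m \<omega>" unfolding c_def by (simp add: algebra_simps)
    ultimately show ?thesis by simp
  qed
  have Zpos: "Z \<omega> > 0" for \<omega> using Zb[of \<omega>] by (metis exp_gt_zero less_le_trans)
  have Zm: "Z \<in> borel_measurable M" unfolding Z_def by (rule Z_meas[OF N meas])
  have Eeq: "{\<omega> \<in> space M. a \<le> m \<omega>} = {\<omega> \<in> space M. \<exists>ev. eigenvalue (scaled_mat N (Jn \<omega>)) ev \<and> \<bar>ev\<bar> \<ge> a}" for a
    unfolding m_def scaled_Mt using specm_event[OF N, of "A _", OF symA] by (auto simp: A_def)
  have Es: "{\<omega> \<in> space M. a \<le> m \<omega>} \<in> sets M" for a
    unfolding Eeq by (rule E_meas[OF N meas symm])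
  have tail: "measure M {\<omega> \<in> space M. a \<le> m \<omega>} \<le> C1 * exp (- \<theta> * a^2 * real N)" if "a > lb" for a
    unfolding Eeq by (rule H1[OF that])
  have main: "integrable M Z \<and> (\<integral>\<omega>. Z \<omega> \<partial>M) \<le> exp (c * real N * a0)
      + C1 * exp (real N * (c * \<delta> + c^2 / (4*(\<theta> - \<epsilon>)))) / (1 - exp (- \<epsilon> * a0 * \<delta>))"
    if "a0 > lb" "\<delta> > 0" "0 < \<epsilon>" "\<epsilon> < \<theta>" for a0 \<delta> \<epsilon>
    by (rule EZ_bound[OF prob Zm _ Es tail N c _ that]) (use Zb Zpos lb C1 in \<open>auto intro: less_imp_le\<close>)
  have intZ: "integrable M Z" using main[of "lb + 1" 1 "\<theta>/2"] th by simp
  have EZpos: "(\<integral>\<omega>. Z \<omega> \<partial>M) > 0" by (rule P.expectation_greater[OF intZ]) (use Zpos in simp)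
  define S where "S = (\<lambda>\<omega>. c * real N * (\<Sum>i<N. \<Sum>j<N. \<bar>A \<omega> i j\<bar>))"
  have intS: "integrable M S" unfolding S_def
    by (intro integrable_mult_right integrable_sum) (auto simp: A_def intro!: integrable_divide integrable_abs intg)
  have lnb: "\<bar>ln (Z \<omega>)\<bar> \<le> S \<omega>" for \<omega>
  proof -
    have "ln (Z \<omega>) \<le> ln (exp (c * real N * m \<omega>))" using Zb[of \<omega>] Zpos[of \<omega>] by (subst ln_le_cancel_iff) auto
    then have 1: "ln (Z \<omega>) \<le> c * real N * m \<omega>" by simp
    have "ln (exp (- (c * real N * m \<omega>))) \<le> ln (Z \<omega>)" using Zb[of \<omega>] Zpos[of \<omega>] by (subst ln_le_cancel_iff) auto
    then have "- (c * real N * m \<omega>) \<le> ln (Z \<omega>)" by simp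
    note 1 this
    moreover have "c * real N * m \<omega> \<le> S \<omega>" unfolding S_def m_def
      using specm_le[OF N, of "A \<omega>", OF symA] c by (intro mult_left_mono) auto
    ultimately show ?thesis by (simp add: abs_le_iff)
  qed
  have S0: "S \<omega> \<ge> 0" for \<omega> using lnb[of \<omega>] by linarith
  have lnm: "(\<lambda>\<omega>. ln (Z \<omega>)) \<in> borel_measurable M" using Zm by measurable
  have intln: "integrable M (\<lambda>\<omega>. ln (Z \<omega>))"
    by (rule Bochner_Integration.integrable_bound[OF intS lnm]) (use lnb S0 in \<open>auto intro!: AE_I2\<close>)
  have "- ln (\<integral>\<omega>. Z \<omega> \<partial>M) \<le> (\<integral>\<omega>. - ln (Z \<omega>) \<partial>M)"
  proof (rule P.jensens_inequality[where I="{0<..}" and a=0 and b=0])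
    show "AE x in M. Z x \<in> {0<..}" using Zpos by simp
    show "integrable M (\<lambda>x. - ln (Z x))" using intln by simp
    show "convex_on {0<..} (\<lambda>x. - ln x)" using ln_concave by (simp add: concave_on_def)
  qed (use intZ in auto)
  then have jen: "(\<integral>\<omega>. ln (Z \<omega>) \<partial>M) \<le> ln (\<integral>\<omega>. Z \<omega> \<partial>M)" by simp
  have up: "ln (\<integral>\<omega>. Z \<omega> \<partial>M) \<le> ln (1 + C1 / (1 - exp (- \<epsilon> * a0 * \<delta>)))
           + real N * max (c * a0) (c * \<delta> + c^2 / (4*(\<theta> - \<epsilon>)))"
    if h: "a0 > lb" "\<delta> > 0" "0 < \<epsilon>" "\<epsilon> < \<theta>" for a0 \<delta> \<epsilon>
  proof -
    define Mx where "Mx = max (c * a0) (c * \<delta> + c^2 / (4*(\<theta> - \<epsilon>)))"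
    define r where "r = exp (- \<epsilon> * a0 * \<delta>)"
    have r: "0 < r" "r < 1" unfolding r_def using h lb by auto
    have K: "C1 / (1 - r) \<ge> 0" using r C1 by simp
    have "real N * (c * a0) \<le> real N * Mx" unfolding Mx_def by (intro mult_left_mono) auto
    then have e1: "exp (c * real N * a0) \<le> exp (real N * Mx)" by (simp add: mult.commute mult.left_commute)
    have e2: "exp (real N * (c * \<delta> + c^2 / (4*(\<theta> - \<epsilon>)))) \<le> exp (real N * Mx)" unfolding Mx_def
      by (intro exp_mono mult_left_mono) auto
    have "(\<integral>\<omega>. Z \<omega> \<partial>M) \<le> exp (c * real N * a0) + C1 * exp (real N * (c * \<delta> + c^2 / (4*(\<theta> - \<epsilon>)))) / (1 - r)"
      using main[OF h] unfolding r_def by simp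
    also have "\<dots> \<le> exp (real N * Mx) + C1 / (1 - r) * exp (real N * Mx)"
    proof (rule add_mono[OF e1])
      have "C1 / (1 - r) * exp (real N * (c * \<delta> + c^2 / (4*(\<theta> - \<epsilon>)))) \<le> C1 / (1 - r) * exp (real N * Mx)"
        using e2 K by (rule mult_left_mono)
      then show "C1 * exp (real N * (c * \<delta> + c^2 / (4*(\<theta> - \<epsilon>)))) / (1 - r) \<le> C1 / (1 - r) * exp (real N * Mx)"
        by simp
    qed
    also have "\<dots> = (1 + C1 / (1 - r)) * exp (real N * Mx)" by (simp add: algebra_simps)
    finally have le: "(\<integral>\<omega>. Z \<omega> \<partial>M) \<le> (1 + C1 / (1 - r)) * exp (real N * Mx)" .
    have "ln (\<integral>\<omega>. Z \<omega> \<partial>M) \<le> ln ((1 + C1 / (1 - r)) * exp (real N * Mx))"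
      using le EZpos by (subst ln_le_cancel_iff) auto
    also have "\<dots> = ln (1 + C1 / (1 - r)) + real N * Mx" using K by (simp add: ln_mult)
    finally show ?thesis unfolding Mx_def r_def .
  qed
  show ?thesis using jen up unfolding Z_def c_def by blast
qed

theorem mainTheorem5:
  fixes M :: "'w measure"
    and J :: "nat \<Rightarrow> 'w \<Rightarrow> nat \<Rightarrow> nat \<Rightarrow> real"
    and Jsq lb C1 \<theta> \<beta> R :: real
  assumes prob: "prob_space M"
    and meas: "\<And>N i j. (\<lambda>\<omega>. J N \<omega> i j) \<in> borel_measurable M"
    and symm: "\<And>N \<omega> i j. J N \<omega> i j = J N \<omega> j i"
    and indep: "\<And>N. prob_space.indep_vars M (\<lambda>_. borel) (\<lambda>(i,j) \<omega>. J N \<omega> i j)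
                        {(i,j). i \<le> j \<and> j < N}"
    and mean0: "\<And>N i j. i < N \<Longrightarrow> j < N \<Longrightarrow>
                  integrable M (\<lambda>\<omega>. J N \<omega> i j) \<and> (\<integral>\<omega>. J N \<omega> i j \<partial>M) = 0"
    and Jsq_pos: "Jsq > 0"
    and var: "\<And>N i j. i < N \<Longrightarrow> j < N \<Longrightarrow>
                  integrable M (\<lambda>\<omega>. (J N \<omega> i j)\<^sup>2) \<and> (\<integral>\<omega>. (J N \<omega> i j)\<^sup>2 \<partial>M) = Jsq"
    and subgauss: "\<exists>\<theta>0 > 0. \<exists>C::real. \<forall>N i j. i < N \<longrightarrow> j < N \<longrightarrow>
                  (\<integral>\<^sup>+\<omega>. ennreal (exp (\<theta>0 * (J N \<omega> i j)\<^sup>2 / real N)) \<partial>M) \<le> ennreal C"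
    and lb_pos: "lb > 0" and C1_pos: "C1 > 0" and \<theta>_pos: "\<theta> > 0"
    and H1: "\<And>N a. N \<ge> 1 \<Longrightarrow> a > lb \<Longrightarrow>
               measure M {\<omega> \<in> space M. \<exists>ev. eigenvalue (scaled_mat N (J N \<omega>)) ev \<and> \<bar>ev\<bar> \<ge> a}
                 \<le> C1 * exp (- \<theta> * a\<^sup>2 * real N)"
    and H2: "AE \<omega> in M. \<forall>f::real \<Rightarrow> real. continuous_on UNIV f \<and> bounded (range f) \<longrightarrow>
               (\<lambda>N. esd_avg N (scaled_mat N (J N \<omega>)) f)
                 \<longlonglongrightarrow> (\<integral>\<mu>. f \<mu> * semicircle_density lb \<mu> \<partial>lborel)"
    and \<beta>_pos: "\<beta> > 0" and R_pos: "R > 0"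
  shows "limsup (\<lambda>N. ereal ((1 / real N) * (\<integral>\<omega>. ln (Z_sf N \<beta> R (J N \<omega>)) \<partial>M)))
           \<le> limsup (\<lambda>N. ereal ((1 / real N) * ln (\<integral>\<omega>. Z_sf N \<beta> R (J N \<omega>) \<partial>M)))
       \<and> limsup (\<lambda>N. ereal ((1 / real N) * ln (\<integral>\<omega>. Z_sf N \<beta> R (J N \<omega>) \<partial>M)))
           \<le> ereal (max (\<beta> * lb * R\<^sup>2) (\<beta>\<^sup>2 * R ^ 4 / (4 * \<theta>)))"
proof -
  define c where "c = \<beta> * R^2"
  have c: "c > 0" unfolding c_def using \<beta>_pos R_pos by simp
  have pN: "(\<integral>\<omega>. ln (Z_sf N \<beta> R (J N \<omega>)) \<partial>M) \<le> ln (\<integral>\<omega>. Z_sf N \<beta> R (J N \<omega>) \<partial>M)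
    \<and> (\<forall>a0 \<delta> \<epsilon>. a0 > lb \<longrightarrow> \<delta> > 0 \<longrightarrow> 0 < \<epsilon> \<longrightarrow> \<epsilon> < \<theta> \<longrightarrow>
        ln (\<integral>\<omega>. Z_sf N \<beta> R (J N \<omega>) \<partial>M) \<le> ln (1 + C1 / (1 - exp (- \<epsilon> * a0 * \<delta>)))
           + real N * max (c * a0) (c * \<delta> + c^2 / (4*(\<theta> - \<epsilon>))))" if N: "N \<ge> 1" for N
    unfolding c_def
  proof (rule perN[OF prob meas symm _ H1 N \<beta>_pos R_pos lb_pos C1_pos \<theta>_pos])
    show "\<And>i j. i < N \<Longrightarrow> j < N \<Longrightarrow> integrable M (\<lambda>\<omega>. J N \<omega> i j)" using mean0 by blast
  qed (use N in auto)
  define v where "v = (\<lambda>N. ereal ((1 / real N) * ln (\<integral>\<omega>. Z_sf N \<beta> R (J N \<omega>) \<partial>M)))"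
  have part1: "limsup (\<lambda>N. ereal ((1 / real N) * (\<integral>\<omega>. ln (Z_sf N \<beta> R (J N \<omega>)) \<partial>M))) \<le> limsup v"
    unfolding v_def
  proof (rule Limsup_mono)
    show "\<forall>\<^sub>F N in sequentially. ereal ((1 / real N) * (\<integral>\<omega>. ln (Z_sf N \<beta> R (J N \<omega>)) \<partial>M))
        \<le> ereal ((1 / real N) * ln (\<integral>\<omega>. Z_sf N \<beta> R (J N \<omega>) \<partial>M))"
      using eventually_ge_at_top[of 1]
    proof eventually_elim
      case (elim N)
      have "(\<integral>\<omega>. ln (Z_sf N \<beta> R (J N \<omega>)) \<partial>M) \<le> ln (\<integral>\<omega>. Z_sf N \<beta> R (J N \<omega>) \<partial>M)"
        using pN[OF elim] by blast
      then have "(1 / real N) * (\<integral>\<omega>. ln (Z_sf N \<beta> R (J N \<omega>)) \<partial>M) \<le> (1 / real N) * ln (\<integral>\<omega>. Z_sf N \<beta> R (J N \<omega>) \<partial>M)"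
        by (rule mult_left_mono) simp
      then show ?case by (simp only: ereal_less_eq)
    qed
  qed
  define T where "T = max (\<beta> * lb * R\<^sup>2) (\<beta>\<^sup>2 * R ^ 4 / (4 * \<theta>))"
  define u where "u = c^2 / (4*\<theta>)"
  have T: "T = max (c * lb) u" unfolding T_def u_def c_def by (simp add: power_mult_distrib algebra_simps)
  have u0: "u > 0" unfolding u_def using c \<theta>_pos by simp
  have part2: "limsup v \<le> ereal T"
  proof (rule ereal_le_epsilon2)
    fix \<eta> :: real assume \<eta>: "0 < \<eta>"
    define a0 where "a0 = lb + \<eta> / c"
    define \<delta> where "\<delta> = \<eta> / (2*c)"
    define \<epsilon> where "\<epsilon> = \<theta> - c^2 / (4*u + 2*\<eta>)"
    define L where "L = ln (1 + C1 / (1 - exp (- \<epsilon> * a0 * \<delta>)))"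
    have a0: "a0 > lb" unfolding a0_def using \<eta> c by simp
    have d: "\<delta> > 0" unfolding \<delta>_def using \<eta> c by simp
    have te: "\<theta> - \<epsilon> = c^2 / (4*u + 2*\<eta>)" unfolding \<epsilon>_def by simp
    have cu: "c^2 = 4 * u * \<theta>" unfolding u_def using \<theta>_pos by simp
    have e1: "\<epsilon> < \<theta>" unfolding \<epsilon>_def using c u0 \<eta> by simp
    have e0: "0 < \<epsilon>"
    proof -
      have "c^2 < \<theta> * (4*u + 2*\<eta>)" using cu \<theta>_pos \<eta> by (simp add: algebra_simps)
      then have "c^2 / (4*u + 2*\<eta>) < \<theta>" using u0 \<eta> by (simp add: divide_less_eq)
      then show ?thesis unfolding \<epsilon>_def by simp
    qed
    have m1: "c * a0 = c * lb + \<eta>" unfolding a0_def using c by (simp add: algebra_simps)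
    have m2: "c * \<delta> + c^2 / (4*(\<theta> - \<epsilon>)) = u + \<eta>"
      unfolding te \<delta>_def using c u0 \<eta> by (simp add: field_simps)
    have Mx: "max (c * a0) (c * \<delta> + c^2 / (4*(\<theta> - \<epsilon>))) = T + \<eta>" unfolding m1 m2 T by simp
    have ev: "\<forall>\<^sub>F N in sequentially. v N \<le> ereal (T + \<eta> + L * (1 / real N))"
      using eventually_ge_at_top[of 1]
    proof eventually_elim
      case (elim N)
      have h: "\<forall>a0 \<delta> \<epsilon>. a0 > lb \<longrightarrow> \<delta> > 0 \<longrightarrow> 0 < \<epsilon> \<longrightarrow> \<epsilon> < \<theta> \<longrightarrow>
        ln (\<integral>\<omega>. Z_sf N \<beta> R (J N \<omega>) \<partial>M) \<le> ln (1 + C1 / (1 - exp (- \<epsilon> * a0 * \<delta>)))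
           + real N * max (c * a0) (c * \<delta> + c^2 / (4*(\<theta> - \<epsilon>)))"
        using pN[OF elim] by (rule conjunct2)
      have "ln (\<integral>\<omega>. Z_sf N \<beta> R (J N \<omega>) \<partial>M) \<le> L + real N * max (c * a0) (c * \<delta> + c^2 / (4*(\<theta> - \<epsilon>)))"
        unfolding L_def by (rule h[rule_format, OF a0 d e0 e1])
      then have "ln (\<integral>\<omega>. Z_sf N \<beta> R (J N \<omega>) \<partial>M) \<le> L + real N * (T + \<eta>)"
        by (simp only: Mx)
      then have "(1 / real N) * ln (\<integral>\<omega>. Z_sf N \<beta> R (J N \<omega>) \<partial>M) \<le> (1 / real N) * (L + real N * (T + \<eta>))"
        by (rule mult_left_mono) simp
      also have "\<dots> = T + \<eta> + L * (1 / real N)" using elim by (simp add: field_simps)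
      finally show ?case unfolding v_def by simp
    qed
    have lim: "(\<lambda>N. ereal (T + \<eta> + L * (1 / real N))) \<longlonglongrightarrow> ereal (T + \<eta>)"
    proof -
      have "(\<lambda>N. T + \<eta> + L * (1 / real N)) \<longlonglongrightarrow> T + \<eta> + L * 0"
        by (intro tendsto_intros lim_1_over_n)
      then show ?thesis by (simp add: lim_ereal)
    qed
    have "limsup v \<le> limsup (\<lambda>N. ereal (T + \<eta> + L * (1 / real N)))" by (rule Limsup_mono[OF ev])
    also have "\<dots> = ereal (T + \<eta>)" by (rule lim_imp_Limsup[OF _ lim]) simp
    finally show "limsup v \<le> ereal T + ereal \<eta>" by simp
  qed
  show ?thesis using part1 part2 unfolding v_def T_def by simp
qed

end
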